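(* Let $f:\mathbb{Z}\to[0,\infty)$ be a non-negative function of bounded variation. Then: (i) if $n$ is a local maximum of $M_Lf$, then $M_Lf(n)=f(n)$; (ii) if $n$ is a local maximum of $M_Rf$, then $M_Rf(n)=f(n)$; (iii) if $n$ is a local maximum of $\widetilde{M}f$, then $\widetilde{M}f(n)=f(n)$.
   Context: Let $\mathbb{Z}^+=\{0,1,2,\dots\}$. For $f:\mathbb{Z}\to[0,\infty)$ define the left and right maximal operators $$M_Lf(n)=\sup_{r\in\mathbb{Z}^+}\frac{1}{r+\frac12}\Big\{\tfrac12 f(n)+\sum_{k=-r}^{-1}f(n+k)\Big\},\qquad M_Rf(n)=\sup_{s\in\mathbb{Z}^+}\frac{1}{s+\frac12}\Big\{\tfrac12 f(n)+\sum_{k=1}^{s}f(n+k)\Big\},$$ and the non-centered maximal operator $\widetilde{M}f(n)=\sup_{r,s\in\mathbb{Z}^+}\frac{1}{r+s+1}\sum_{k=-r}^{s}|f(n+k)|$. A function of bounded variation means $\sum_{n\in\mathbb{Z}}|f(n+1)-f(n)|<\infty$. A point $n\in\mathbb{Z}$ is a local maximum of a function $g:\mathbb{Z}\to\mathbb{R}$ if $g(n-1)\le g(n)$ and $g(n)>g(n+1)$. *)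

theory Defs
  imports "HOL-Analysis.Analysis"
begin

definition max_left :: "(int \<Rightarrow> real) \<Rightarrow> int \<Rightarrow> real" where
  "max_left f n = (SUP r::nat. (1 / (real r + 1/2)) *
      (f n / 2 + (\<Sum>k\<in>{- int r..-1}. f (n + k))))"

definition max_right :: "(int \<Rightarrow> real) \<Rightarrow> int \<Rightarrow> real" where
  "max_right f n = (SUP s::nat. (1 / (real s + 1/2)) *
      (f n / 2 + (\<Sum>k\<in>{1..int s}. f (n + k))))"

definition Mtilde :: "(int \<Rightarrow> real) \<Rightarrow> int \<Rightarrow> real" where
  "Mtilde f n = (SUP (r, s) \<in> (UNIV :: (nat \<times> nat) set).
      (1 / (real r + real s + 1)) * (\<Sum>k\<in>{- int r..int s}. \<bar>f (n + k)\<bar>))"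

definition bounded_variation :: "(int \<Rightarrow> real) \<Rightarrow> bool" where
  "bounded_variation f \<longleftrightarrow> (\<lambda>n. \<bar>f (n + 1) - f n\<bar>) summable_on (UNIV :: int set)"

definition local_max :: "(int \<Rightarrow> real) \<Rightarrow> int \<Rightarrow> bool" where
  "local_max g n \<longleftrightarrow> g (n - 1) \<le> g n \<and> g n > g (n + 1)"

end

theory Submission
  imports Defs
begin

lemma shift_sum: "(\<Sum>k\<in>{a..b::int}. g (n+k)) = (\<Sum>j\<in>{n+a..n+b}. (g j::real))"
  by (rule sum.reindex_bij_witness[of _ "\<lambda>j. j - n" "\<lambda>k. n + k"]) auto

lemma SI_top: "a \<le> b + 1 \<Longrightarrow> (\<Sum>j\<in>{a..b+1::int}. (g j::real)) = (\<Sum>j\<in>{a..b}. g j) + g (b+1)"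
proof -
  assume "a \<le> b + 1"
  then have "{a..b+1} = insert (b+1) {a..b}" by auto
  then show ?thesis by (simp add: add.commute)
qed

lemma SI_bound: "(\<And>j. g j \<le> B) \<Longrightarrow> (\<Sum>j\<in>{a..b::int}. (g j::real)) \<le> real (nat (b - a + 1)) * B"
proof -
  assume "\<And>j. g j \<le> B"
  then have "(\<Sum>j\<in>{a..b}. g j) \<le> of_nat (card {a..b}) * B" by (intro sum_bounded_above) auto
  then show ?thesis by simp
qed

lemma bv_bounded:
  assumes "bounded_variation f"
  shows "\<exists>B. \<forall>n. \<bar>f n\<bar> \<le> B"
proof -
  define g where "g = (\<lambda>n::int. \<bar>f (n + 1) - f n\<bar>)"
  have sg: "g summable_on UNIV" using assms unfolding bounded_variation_def g_def by simp
  define V where "V = infsum g UNIV"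
  have le: "sum g F \<le> V" if "finite F" for F
    unfolding V_def by (rule finite_sum_le_infsum[OF sg that]) (auto simp: g_def)
  have pos: "\<bar>f (int m) - f 0\<bar> \<le> V" for m
  proof -
    have "f (int m) - f 0 = (\<Sum>k<m. f (int (Suc k)) - f (int k))"
      using sum_lessThan_telescope[of "\<lambda>k. f (int k)" m] by simp
    also have "\<bar>\<dots>\<bar> \<le> (\<Sum>k<m. g (int k))" unfolding g_def
      by (rule order.trans[OF sum_abs]) (simp add: add.commute)
    also have "\<dots> = sum g (int ` {..<m})" by (simp add: sum.reindex)
    also have "\<dots> \<le> V" by (rule le) auto
    finally show ?thesis .
  qed
  have neg: "\<bar>f (- int m) - f 0\<bar> \<le> V" for m
  proof -
    have "f (- int m) - f 0 = - (\<Sum>k<m. f (- int k) - f (- int (Suc k)))"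
      using sum_lessThan_telescope'[of "\<lambda>k. f (- int k)" m] by simp
    also have "\<bar>\<dots>\<bar> \<le> (\<Sum>k<m. g (- 1 - int k))" unfolding g_def abs_minus_cancel
      by (rule order.trans[OF sum_abs]) (simp add: abs_minus_commute)
    also have "\<dots> = sum g ((\<lambda>k. - 1 - int k) ` {..<m})" by (subst sum.reindex) (auto simp: inj_on_def)
    also have "\<dots> \<le> V" by (rule le) auto
    finally show ?thesis .
  qed
  have "\<bar>f n\<bar> \<le> \<bar>f 0\<bar> + V" for n
  proof (cases "n \<ge> 0")
    case True
    then obtain m where "n = int m" using nonneg_int_cases by blast
    then show ?thesis using pos[of m] by (smt (verit))
  next
    case False
    then obtain m where "n = - int m" by (metis minus_minus nonneg_int_cases neg_0_le_iff_le linorder_not_le less_imp_le)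
    then show ?thesis using neg[of m] by (smt (verit))
  qed
  then show ?thesis by blast
qed

lemma key:
  fixes S X Y u w :: real
  assumes "X \<le> S" "Y \<le> S" "u < S" "X < S \<or> Y < S"
  shows "\<exists>V<S. \<forall>p A. p \<ge> 1 \<longrightarrow> p*A \<le> (p-1)*X + u \<longrightarrow> p*A \<le> (p+1)*Y - w \<longrightarrow> A \<le> V"
proof (cases "X < S")
  case True
  show ?thesis
  proof (intro exI[of _ "max X u"] conjI allI impI)
    show "max X u < S" using True assms by simp
    fix p A :: real assume p: "p \<ge> 1" and h: "p*A \<le> (p-1)*X + u"
    have "(p-1)*X \<le> (p-1)*max X u" using p by (intro mult_left_mono) auto
    then have "p*A \<le> p * max X u" using h by (simp add: algebra_simps)
    then show "A \<le> max X u" using p by simp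
  qed
next
  case False
  then have Y: "Y < S" using assms by simp
  define d where "d = S - u"
  have d: "d > 0" using assms d_def by simp
  show ?thesis
  proof (cases "Y - w \<le> 0")
    case True
    show ?thesis
    proof (intro exI[of _ Y] conjI allI impI)
      show "Y < S" by fact
      fix p A :: real assume p: "p \<ge> 1" and h: "p*A \<le> (p+1)*Y - w"
      moreover have "(p+1)*Y = p*Y + Y" by (simp add: algebra_simps)
      ultimately have "p*A \<le> p*Y" using True by linarith
      then show "A \<le> Y" using p by simp
    qed
  next
    case False
    define e where "e = Y - w"
    have e: "e > 0" using False e_def by simp
    show ?thesis
    proof (intro exI[of _ "(d*Y + e*S)/(d+e)"] conjI allI impI)
      have "d*Y + e*S < (d+e)*S" using d Y by (simp add: algebra_simps)
      then show "(d*Y + e*S)/(d+e) < S" using d e by (simp add: field_simps)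
      fix p A :: real assume p: "p \<ge> 1" and h1: "p*A \<le> (p-1)*X + u" and h2: "p*A \<le> (p+1)*Y - w"
      have "(p-1)*X \<le> (p-1)*S" using p assms by (intro mult_left_mono) auto
      then have h1': "p*A \<le> p*S - d" using h1 d_def by (simp add: algebra_simps)
      have h2': "p*A \<le> p*Y + e" using h2 e_def by (simp add: algebra_simps)
      have "d*(p*A) \<le> d*(p*Y+e)" using h2' d by (intro mult_left_mono) auto
      moreover have "e*(p*A) \<le> e*(p*S-d)" using h1' e by (intro mult_left_mono) auto
      ultimately have "p*(A*(d+e)) \<le> p*(d*Y+e*S)" by (simp add: algebra_simps)
      then have "A*(d+e) \<le> d*Y+e*S" using p by simp
      then show "A \<le> (d*Y + e*S)/(d+e)" using d e by (simp add: field_simps)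
    qed
  qed
qed

lemma SI_bot: "a \<le> b \<Longrightarrow> (\<Sum>j\<in>{a..b::int}. (g j::real)) = g a + (\<Sum>j\<in>{a+1..b}. g j)"
proof -
  assume "a \<le> b"
  then have "{a..b} = insert a {a+1..b}" by auto
  then show ?thesis by simp
qed

definition NL :: "(int \<Rightarrow> real) \<Rightarrow> int \<Rightarrow> nat \<Rightarrow> real" where
  "NL f n r = f n / 2 + (\<Sum>j\<in>{n - int r..n-1}. f j)"

lemma part1:
  fixes f :: "int \<Rightarrow> real"
  assumes B: "\<And>m. f m \<le> B" and lm: "local_max (max_left f) n"
  shows "max_left f n = f n"
proof -
  define A where "A = (\<lambda>m r. NL f m r / (real r + 1/2))"
  have MLd: "max_left f m = (SUP r. A m r)" for m
    unfolding max_left_def A_def NL_def by (simp add: shift_sum)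
  have Ale: "A m r \<le> B" for m r
  proof -
    have "(\<Sum>j\<in>{m - int r..m-1}. f j) \<le> real (nat (m - 1 - (m - int r) + 1)) * B"
      by (rule SI_bound[OF B])
    then have "NL f m r \<le> (real r + 1/2) * B" using B[of m] unfolding NL_def by (simp add: algebra_simps)
    then show ?thesis unfolding A_def by (simp add: divide_le_eq mult.commute)
  qed
  have up: "A m r \<le> max_left f m" for m r
    unfolding MLd by (rule cSUP_upper) (auto intro!: bdd_aboveI[of _ B] simp: Ale)
  have A0: "A m 0 = f m" for m unfolding A_def NL_def by simp
  have pA: "(real r + 1/2) * A m r = NL f m r" for m r unfolding A_def
    by (simp add: field_simps)
  have rec1: "NL f m (Suc q) = (f (m-1) + f m)/2 + NL f (m-1) q" for m q
  proof -
    have "(\<Sum>j\<in>{m - int q - 1..m-2+1}. f j) = (\<Sum>j\<in>{m - int q - 1..m-2}. f j) + f (m-2+1)"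
      by (rule SI_top) simp
    then show ?thesis unfolding NL_def by (simp add: algebra_simps add_divide_distrib)
  qed
  have rec2: "NL f (m+1) (Suc r) = NL f m r + (f m + f (m+1))/2" for m r
  proof -
    have "(\<Sum>j\<in>{m - int r..m-1+1}. f j) = (\<Sum>j\<in>{m - int r..m-1}. f j) + f (m-1+1)"
      by (rule SI_top) simp
    then show ?thesis unfolding NL_def by (simp add: algebra_simps add_divide_distrib)
  qed
  define S where "S = max_left f n"
  define X where "X = max_left f (n-1)"
  define Y where "Y = max_left f (n+1)"
  have XS: "X \<le> S" "Y < S" using lm unfolding local_max_def X_def Y_def S_def by auto
  have bS: "f n \<le> S" using up[of n 0] A0 S_def by simp
  show ?thesis
  proof (rule ccontr)
    assume "max_left f n \<noteq> f n"
    then have b: "f n < S" using bS S_def by simp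
    have aX: "f (n-1) \<le> X" using up[of "n-1" 0] A0 X_def by simp
    have cY: "f (n+1) \<le> Y" using up[of "n+1" 0] A0 Y_def by simp
    obtain V where V: "V < S" and HV: "\<And>p a. p \<ge> 1 \<Longrightarrow> p*a \<le> (p-1)*X + (f (n-1) + f n)/2
        \<Longrightarrow> p*a \<le> (p+1)*Y - (f n + f (n+1))/2 \<Longrightarrow> a \<le> V"
      using key[of X S Y "(f (n-1) + f n)/2" "(f n + f (n+1))/2"] XS b aX by auto
    have "A n r \<le> max V (f n)" for r
    proof (cases r)
      case 0 then show ?thesis using A0 by simp
    next
      case (Suc q)
      let ?p = "real r + 1/2"
      have h1: "?p * A n r \<le> (?p-1)*X + (f (n-1) + f n)/2"
      proof -
        have "?p * A n r = NL f n r" by (rule pA)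
        also have "\<dots> = (f (n-1) + f n)/2 + NL f (n-1) q" using rec1 Suc by simp
        also have "\<dots> = (f (n-1) + f n)/2 + (real q + 1/2) * A (n-1) q" using pA by simp
        finally have "?p * A n r = (f (n-1) + f n)/2 + (real q + 1/2) * A (n-1) q" .
        moreover have "(real q + 1/2) * A (n-1) q \<le> (real q + 1/2) * X"
          using up[of "n-1" q] X_def by (intro mult_left_mono) auto
        moreover have "(?p - 1)*X = (real q + 1/2)*X" using Suc by (simp add: algebra_simps)
        ultimately show ?thesis by linarith
      qed
      have h2: "?p * A n r \<le> (?p+1)*Y - (f n + f (n+1))/2"
      proof -
        have "?p * A n r + (f n + f (n+1))/2 = NL f n r + (f n + f (n+1))/2" using pA by simp
        also have "\<dots> = NL f (n+1) (Suc r)" using rec2 by simp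
        also have "\<dots> = (real (Suc r) + 1/2) * A (n+1) (Suc r)" by (rule pA[symmetric])
        finally have "?p * A n r + (f n + f (n+1))/2 = (real (Suc r) + 1/2) * A (n+1) (Suc r)" .
        moreover have "(real (Suc r) + 1/2) * A (n+1) (Suc r) \<le> (real (Suc r) + 1/2) * Y"
          using up[of "n+1" "Suc r"] Y_def by (intro mult_left_mono) auto
        moreover have "(real (Suc r) + 1/2) * Y = (?p+1)*Y" by simp
        ultimately show ?thesis by linarith
      qed
      have "A n r \<le> V" by (rule HV[OF _ h1 h2]) (simp add: Suc)
      then show ?thesis by simp
    qed
    then have "S \<le> max V (f n)" unfolding S_def MLd by (intro cSUP_least) auto
    then show False using V b by simp
  qed
qed


definition NR :: "(int \<Rightarrow> real) \<Rightarrow> int \<Rightarrow> nat \<Rightarrow> real" where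
  "NR f n s = f n / 2 + (\<Sum>j\<in>{n+1..n + int s}. f j)"

lemma part2:
  fixes f :: "int \<Rightarrow> real"
  assumes B: "\<And>m. f m \<le> B" and lm: "local_max (max_right f) n"
  shows "max_right f n = f n"
proof -
  define A where "A = (\<lambda>m r. NR f m r / (real r + 1/2))"
  have MRd: "max_right f m = (SUP r. A m r)" for m
    unfolding max_right_def A_def NR_def by (simp add: shift_sum)
  have Ale: "A m r \<le> B" for m r
  proof -
    have "(\<Sum>j\<in>{m+1..m + int r}. f j) \<le> real (nat (m + int r - (m+1) + 1)) * B"
      by (rule SI_bound[OF B])
    then have "NR f m r \<le> (real r + 1/2) * B" using B[of m] unfolding NR_def by (simp add: algebra_simps)
    then show ?thesis unfolding A_def by (simp add: divide_le_eq mult.commute)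
  qed
  have up: "A m r \<le> max_right f m" for m r
    unfolding MRd by (rule cSUP_upper) (auto intro!: bdd_aboveI[of _ B] simp: Ale)
  have A0: "A m 0 = f m" for m unfolding A_def NR_def by simp
  have pA: "(real r + 1/2) * A m r = NR f m r" for m r unfolding A_def
    by (simp add: field_simps)
  have rec1: "NR f m (Suc q) = (f m + f (m+1))/2 + NR f (m+1) q" for m q
  proof -
    have "(\<Sum>j\<in>{m+1..m + int q + 1}. f j) = f (m+1) + (\<Sum>j\<in>{m+1+1..m + int q + 1}. f j)"
      by (rule SI_bot) simp
    then show ?thesis unfolding NR_def by (simp add: algebra_simps add_divide_distrib)
  qed
  have rec2: "NR f (m-1) (Suc r) = (f (m-1) + f m)/2 + NR f m r" for m r
  proof -
    have "(\<Sum>j\<in>{m..m + int r}. f j) = f m + (\<Sum>j\<in>{m+1..m + int r}. f j)"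
      by (rule SI_bot) simp
    then show ?thesis unfolding NR_def by (simp add: algebra_simps add_divide_distrib)
  qed
  define S where "S = max_right f n"
  define X where "X = max_right f (n+1)"
  define Y where "Y = max_right f (n-1)"
  have XS: "X < S" "Y \<le> S" using lm unfolding local_max_def X_def Y_def S_def by auto
  have bS: "f n \<le> S" using up[of n 0] A0 S_def by simp
  show ?thesis
  proof (rule ccontr)
    assume "max_right f n \<noteq> f n"
    then have b: "f n < S" using bS S_def by simp
    have cX: "f (n+1) \<le> X" using up[of "n+1" 0] A0 X_def by simp
    obtain V where V: "V < S" and HV: "\<And>p a. p \<ge> 1 \<Longrightarrow> p*a \<le> (p-1)*X + (f n + f (n+1))/2
        \<Longrightarrow> p*a \<le> (p+1)*Y - (f (n-1) + f n)/2 \<Longrightarrow> a \<le> V"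
      using key[of X S Y "(f n + f (n+1))/2" "(f (n-1) + f n)/2"] XS b cX by auto
    have "A n r \<le> max V (f n)" for r
    proof (cases r)
      case 0 then show ?thesis using A0 by simp
    next
      case (Suc q)
      let ?p = "real r + 1/2"
      have h1: "?p * A n r \<le> (?p-1)*X + (f n + f (n+1))/2"
      proof -
        have "?p * A n r = NR f n r" by (rule pA)
        also have "\<dots> = (f n + f (n+1))/2 + NR f (n+1) q" using rec1 Suc by simp
        also have "\<dots> = (f n + f (n+1))/2 + (real q + 1/2) * A (n+1) q" using pA by simp
        finally have "?p * A n r = (f n + f (n+1))/2 + (real q + 1/2) * A (n+1) q" .
        moreover have "(real q + 1/2) * A (n+1) q \<le> (real q + 1/2) * X"
          using up[of "n+1" q] X_def by (intro mult_left_mono) auto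
        moreover have "(?p - 1)*X = (real q + 1/2)*X" using Suc by (simp add: algebra_simps)
        ultimately show ?thesis by linarith
      qed
      have h2: "?p * A n r \<le> (?p+1)*Y - (f (n-1) + f n)/2"
      proof -
        have "?p * A n r + (f (n-1) + f n)/2 = NR f n r + (f (n-1) + f n)/2" using pA by simp
        also have "\<dots> = NR f (n-1) (Suc r)" using rec2 by simp
        also have "\<dots> = (real (Suc r) + 1/2) * A (n-1) (Suc r)" by (rule pA[symmetric])
        finally have "?p * A n r + (f (n-1) + f n)/2 = (real (Suc r) + 1/2) * A (n-1) (Suc r)" .
        moreover have "(real (Suc r) + 1/2) * A (n-1) (Suc r) \<le> (real (Suc r) + 1/2) * Y"
          using up[of "n-1" "Suc r"] Y_def by (intro mult_left_mono) auto
        moreover have "(real (Suc r) + 1/2) * Y = (?p+1)*Y" by simp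
        ultimately show ?thesis by linarith
      qed
      have "A n r \<le> V" by (rule HV[OF _ h1 h2]) (simp add: Suc)
      then show ?thesis by simp
    qed
    then have "S \<le> max V (f n)" unfolding S_def MRd by (intro cSUP_least) auto
    then show False using V b by simp
  qed
qed


definition MT :: "(int \<Rightarrow> real) \<Rightarrow> int \<Rightarrow> nat \<Rightarrow> nat \<Rightarrow> real" where
  "MT f n r s = (\<Sum>j\<in>{n - int r..n + int s}. f j) / (real r + real s + 1)"

lemma part3:
  fixes f :: "int \<Rightarrow> real"
  assumes nonneg: "\<And>m. f m \<ge> 0" and B: "\<And>m. f m \<le> B" and lm: "local_max (Mtilde f) n"
  shows "Mtilde f n = f n"
proof -
  have MTd: "Mtilde f m = (SUP (r,s)\<in>UNIV. MT f m r s)" for m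
  proof -
    have "(\<lambda>(r,s). (1 / (real r + real s + 1)) * (\<Sum>k\<in>{- int r..int s}. \<bar>f (m + k)\<bar>))
        = (\<lambda>(r,s). MT f m r s)"
      by (auto simp: fun_eq_iff MT_def shift_sum abs_of_nonneg nonneg)
    then show ?thesis unfolding Mtilde_def by simp
  qed
  have Ale: "MT f m r s \<le> B" for m r s
  proof -
    have "(\<Sum>j\<in>{m - int r..m + int s}. f j) \<le> real (nat (m + int s - (m - int r) + 1)) * B"
      by (rule SI_bound[OF B])
    also have "real (nat (m + int s - (m - int r) + 1)) = real r + real s + 1" by simp
    finally have "(\<Sum>j\<in>{m - int r..m + int s}. f j) \<le> (real r + real s + 1) * B" .
    then show ?thesis unfolding MT_def by (simp add: divide_le_eq mult.commute)
  qed
  have up: "MT f m r s \<le> Mtilde f m" for m r s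
  proof -
    have "bdd_above (range (\<lambda>(r,s). MT f m r s))"
      by (rule bdd_aboveI[of _ B]) (auto simp: Ale)
    then have "(\<lambda>(r,s). MT f m r s) (r,s) \<le> (SUP (r,s)\<in>UNIV. MT f m r s)"
      by (intro cSUP_upper) auto
    then show ?thesis unfolding MTd by simp
  qed
  have M00: "MT f m 0 0 = f m" for m unfolding MT_def by simp
  have pA: "(real r + real s + 1) * MT f m r s = (\<Sum>j\<in>{m - int r..m + int s}. f j)" for m r s
    unfolding MT_def by (simp add: field_simps)
  have shiftR: "MT f m r (Suc s) = MT f (m+1) (Suc r) s" for m r s
    unfolding MT_def by (simp add: algebra_simps)
  define S where "S = Mtilde f n"
  define X where "X = Mtilde f (n-1)"
  define Y where "Y = Mtilde f (n+1)"
  have XS: "X \<le> S" "Y < S" using lm unfolding local_max_def X_def Y_def S_def by auto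
  have bS: "f n \<le> S" using up[of n 0 0] M00 S_def by simp
  show ?thesis
  proof (rule ccontr)
    assume "Mtilde f n \<noteq> f n"
    then have b: "f n < S" using bS S_def by simp
    obtain V where V: "V < S" and HV: "\<And>p a. p \<ge> 1 \<Longrightarrow> p*a \<le> (p-1)*S + f n
        \<Longrightarrow> p*a \<le> (p+1)*Y - f (n+1) \<Longrightarrow> a \<le> V"
      using key[of S S Y "f n" "f (n+1)"] XS b by auto
    have s0: "MT f n r 0 \<le> V" for r
    proof -
      let ?p = "real r + 1"
      have h1: "?p * MT f n r 0 \<le> (?p-1)*S + f n"
      proof (cases r)
        case 0 then show ?thesis using M00 by simp
      next
        case (Suc q)
        have "(\<Sum>j\<in>{n - int r..n-1+1}. f j) = (\<Sum>j\<in>{n - int r..n-1}. f j) + f (n-1+1)"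
          by (rule SI_top) (simp add: Suc)
        moreover have "?p * MT f n r 0 = (\<Sum>j\<in>{n - int r..n}. f j)" using pA[of r 0 n] by simp
        moreover have "(real q + 1) * MT f (n-1) q 0 = (\<Sum>j\<in>{n - 1 - int q..n - 1}. f j)"
          using pA[of q 0 "n-1"] by simp
        moreover have "{n - 1 - int q..n - 1} = {n - int r..n-1}" using Suc by auto
        moreover have "(real q + 1) * MT f (n-1) q 0 \<le> (real q + 1) * S"
          using up[of "n-1" q 0] X_def XS by (intro mult_left_mono) auto
        ultimately have "?p * MT f n r 0 \<le> (real q + 1) * S + f n" by simp
        moreover have "(?p - 1) * S = (real q + 1) * S" using Suc by simp
        ultimately show ?thesis by linarith
      qed
      have h2: "?p * MT f n r 0 \<le> (?p+1)*Y - f (n+1)"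
      proof -
        have "(\<Sum>j\<in>{n - int r..n+1}. f j) = (\<Sum>j\<in>{n - int r..n}. f j) + f (n+1)"
          by (rule SI_top) simp
        moreover have "?p * MT f n r 0 = (\<Sum>j\<in>{n - int r..n}. f j)" using pA[of r 0 n] by simp
        moreover have "(real (Suc r) + 1) * MT f (n+1) (Suc r) 0 = (\<Sum>j\<in>{n - int r..n+1}. f j)"
        proof -
          have "{n + 1 - int (Suc r)..n + 1} = {n - int r..n+1}" by auto
          then show ?thesis using pA[of "Suc r" 0 "n+1"] by simp
        qed
        moreover have "(real (Suc r) + 1) * MT f (n+1) (Suc r) 0 \<le> (real (Suc r) + 1) * Y"
          using up[of "n+1" "Suc r" 0] Y_def by (intro mult_left_mono) auto
        moreover have "(real (Suc r) + 1) * Y = (?p+1)*Y" by simp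
        ultimately show ?thesis by linarith
      qed
      show ?thesis by (rule HV[OF _ h1 h2]) simp
    qed
    have "MT f n r s \<le> max V Y" for r s
    proof (cases s)
      case 0 then show ?thesis using s0[of r] by simp
    next
      case (Suc q)
      then show ?thesis using shiftR[of n r q] up[of "n+1" "Suc r" q] Y_def by simp
    qed
    then have "S \<le> max V Y" unfolding S_def MTd by (intro cSUP_least) auto
    then show False using V XS by simp
  qed
qed

theorem lemma1:
  fixes f :: "int \<Rightarrow> real"
  assumes nonneg: "\<And>n. f n \<ge> 0"
    and bv: "bounded_variation f"
  shows "(\<forall>n. local_max (max_left f) n \<longrightarrow> max_left f n = f n)
    \<and> (\<forall>n. local_max (max_right f) n \<longrightarrow> max_right f n = f n)
    \<and> (\<forall>n. local_max (Mtilde f) n \<longrightarrow> Mtilde f n = f n)"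
proof -
  obtain B where "\<forall>n. \<bar>f n\<bar> \<le> B" using bv_bounded[OF bv] by blast
  then have B: "\<And>n. f n \<le> B" by (meson abs_ge_self order.trans)
  show ?thesis using part1[of f B, OF B] part2[of f B, OF B] part3[of f B, OF nonneg B] by blast
qed

end
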